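(* For all integers $k,d\ge1$ with $k\le 2d$, we have $\theta^{\rm D}(k+1,d+1)\ge\theta^{\rm D}(k,d)$.
   Context: For integers $d\ge1$ and $1\le k\le 2d$, the directed $k$-neighbor graph ($k$-DnG) on $\mathbb{Z}^d$ is the random directed graph obtained by letting each vertex $x\in\mathbb{Z}^d$, independently of all other vertices, choose a uniformly random subset of exactly $k$ of its $2d$ nearest neighbors (in $\ell_1$-distance), and placing a directed edge from $x$ to each chosen neighbor. We write $\theta^{\rm D}(k,d)=\mathbb{P}(o\rightsquigarrow\infty \text{ in the $k$-DnG on }\mathbb{Z}^d)$, where $o$ is the origin and $o\rightsquigarrow\infty$ is the event that there is an infinite self-avoiding directed path along edges of the $k$-DnG starting at $o$. *)

theory Defs
  imports "HOL-Probability.Probability"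
begin

definition lattice :: "nat \<Rightarrow> int list set" where
  "lattice d = {x. length x = d}"

definition origin :: "nat \<Rightarrow> int list" where
  "origin d = replicate d 0"

text \<open>The 2d nearest-neighbour directions: (i, True) means +e_i, (i, False) means -e_i.\<close>
definition dirs :: "nat \<Rightarrow> (nat \<times> bool) set" where
  "dirs d = {..<d} \<times> UNIV"

definition step :: "int list \<Rightarrow> nat \<times> bool \<Rightarrow> int list" where
  "step x v = x[fst v := x ! fst v + (if snd v then 1 else -1)]"

definition choice_pmf :: "nat \<Rightarrow> nat \<Rightarrow> (nat \<times> bool) set pmf" where
  "choice_pmf k d = pmf_of_set {S. S \<subseteq> dirs d \<and> card S = k}"

definition DnG :: "nat \<Rightarrow> nat \<Rightarrow> (int list \<Rightarrow> (nat \<times> bool) set) measure" where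
  "DnG k d = (\<Pi>\<^sub>M x\<in>lattice d. measure_pmf (choice_pmf k d))"

definition reaches_infinity :: "nat \<Rightarrow> (int list \<Rightarrow> (nat \<times> bool) set) \<Rightarrow> bool" where
  "reaches_infinity d \<omega> \<longleftrightarrow>
     (\<exists>p :: nat \<Rightarrow> int list. p 0 = origin d \<and> inj p \<and>
        (\<forall>n. \<exists>v \<in> \<omega> (p n). p (Suc n) = step (p n) v))"

definition thetaD :: "nat \<Rightarrow> nat \<Rightarrow> real" where
  "thetaD k d = measure (DnG k d) {\<omega> \<in> space (DnG k d). reaches_infinity d \<omega>}"

end

theory Submission
  imports Defs "HOL-Library.Transitive_Closure_Table"
begin


definition edges :: "int list set \<Rightarrow> (int list \<Rightarrow> (nat \<times> bool) set) \<Rightarrow> (int list \<times> int list) set" where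
  "edges K \<sigma> = {(x, step x v) | x v. x \<in> K \<and> v \<in> \<sigma> x}"

definition reach :: "nat \<Rightarrow> int list set \<Rightarrow> (int list \<Rightarrow> (nat \<times> bool) set) \<Rightarrow> int list set" where
  "reach d K \<sigma> = {x. (origin d, x) \<in> (edges K \<sigma>)\<^sup>*}"

definition nrm :: "int list \<Rightarrow> int" where
  "nrm x = sum_list (map abs x)"

definition Hn :: "nat \<Rightarrow> nat \<Rightarrow> (int list \<Rightarrow> (nat \<times> bool) set) \<Rightarrow> bool" where
  "Hn d n \<omega> \<longleftrightarrow> (\<exists>z \<in> reach d UNIV \<omega>. int n \<le> nrm z)"

definition bx :: "nat \<Rightarrow> nat \<Rightarrow> int list set" where
  "bx d n = {x. length x = d \<and> nrm x < int n}"

lemma length_step[simp]: "length (step x v) = length x"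
  by (simp add: step_def list_update_beyond)

lemma step_out: "length x \<le> fst v \<Longrightarrow> step x v = x"
  by (simp add: step_def list_update_beyond)

lemma nrm_nonneg: "0 \<le> nrm x"
  unfolding nrm_def by (induct x) auto

lemma nrm_append[simp]: "nrm (y @ [h]) = nrm y + \<bar>h\<bar>"
  by (simp add: nrm_def)

lemma nrm_origin[simp]: "nrm (origin d) = 0"
  by (simp add: nrm_def origin_def sum_list_replicate)

lemma sum_list_upd_int:
  "k < length xs \<Longrightarrow> sum_list (xs[k := x]) = sum_list xs + x - xs ! (k::nat) " for xs :: "int list"
  by (induction xs arbitrary: k) (auto split: nat.splits)

lemma nrm_step: "nrm (step x v) \<le> nrm x + 1"
proof (cases "fst v < length x")
  case True
  let ?a = "x ! fst v + (if snd v then 1 else -1)"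
  have "nrm (step x v) = sum_list ((map abs x)[fst v := \<bar>?a\<bar>])"
    by (simp add: nrm_def step_def map_update)
  also have "\<dots> = nrm x + \<bar>?a\<bar> - \<bar>x ! fst v\<bar>"
    using True by (cases "snd v") (simp_all add: sum_list_upd_int nrm_def)
  also have "\<dots> \<le> nrm x + 1" by auto
  finally show ?thesis .
next
  case False then show ?thesis by (simp add: step_out)
qed

lemma step_append: "fst v < length y \<Longrightarrow> step (y @ [h]) v = step y v @ [h]"
  by (simp add: step_def list_update_append1 nth_append)

lemma step_vert: "step (y @ [h]) (length y, True) = y @ [h + 1]"
  by (simp add: step_def list_update_append)

lemma origin_Suc: "origin (Suc d) = origin d @ [0]"
  by (simp add: origin_def replicate_append_same[symmetric])

lemma length_origin[simp]: "length (origin d) = d"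
  by (simp add: origin_def)

lemma finite_box: "finite (bx d n)"
proof -
  have "bx d n \<subseteq> {xs. set xs \<subseteq> {- int n..int n} \<and> length xs = d}"
  proof
    fix x assume x: "x \<in> bx d n"
    have "\<forall>a\<in>set x. \<bar>a\<bar> \<le> nrm x"
      unfolding nrm_def
      by (intro ballI member_le_sum_list) auto
    with x show "x \<in> {xs. set xs \<subseteq> {- int n..int n} \<and> length xs = d}"
      by (force simp: bx_def)
  qed
  moreover have "finite {xs. set xs \<subseteq> {- int n..int n} \<and> length xs = d}"
    by (intro finite_lists_length_eq) auto
  ultimately show ?thesis by (rule finite_subset)
qed

lemma reach_origin[simp]: "origin d \<in> reach d K \<sigma>"
  by (simp add: reach_def)

lemma reach_step: "x \<in> reach d K \<sigma> \<Longrightarrow> x \<in> K \<Longrightarrow> v \<in> \<sigma> x \<Longrightarrow> step x v \<in> reach d K \<sigma>"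
proof -
  assume a: "x \<in> reach d K \<sigma>" "x \<in> K" "v \<in> \<sigma> x"
  have "(x, step x v) \<in> edges K \<sigma>" unfolding edges_def using a(2,3) by blast
  with a(1) show ?thesis unfolding reach_def by (auto intro: rtrancl_into_rtrancl)
qed

lemma reach_mono: "edges K \<sigma> \<subseteq> edges K' \<sigma>' \<Longrightarrow> reach d K \<sigma> \<subseteq> reach d K' \<sigma>'"
  unfolding reach_def using rtrancl_mono by blast

lemma edges_upd: "x \<notin> K \<Longrightarrow> edges K \<sigma> \<subseteq> edges (insert x K) (\<sigma>(x := A))"
proof
  fix p assume "x \<notin> K" "p \<in> edges K \<sigma>"
  then obtain y v where "p = (y, step y v)" "y \<in> K" "v \<in> \<sigma> y" "y \<noteq> x"
    unfolding edges_def by blast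
  moreover from this have "y \<in> insert x K" "v \<in> (\<sigma>(x := A)) y" by auto
  ultimately show "p \<in> edges (insert x K) (\<sigma>(x := A))" unfolding edges_def by blast
qed

lemma reach_upd: "x \<notin> K \<Longrightarrow> reach d K \<sigma> \<subseteq> reach d (insert x K) (\<sigma>(x := A))"
  by (intro reach_mono edges_upd)

lemma reach_subsetI:
  assumes "origin d \<in> S"
  and "\<And>x v. x \<in> S \<Longrightarrow> x \<in> reach d K \<sigma> \<Longrightarrow> x \<in> K \<Longrightarrow> v \<in> \<sigma> x \<Longrightarrow> step x v \<in> S"
  shows "reach d K \<sigma> \<subseteq> S"
proof
  fix z assume "z \<in> reach d K \<sigma>"
  then have "(origin d, z) \<in> (edges K \<sigma>)\<^sup>*" by (simp add: reach_def)
  then show "z \<in> S"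
  proof (induction rule: rtrancl_induct)
    case base then show ?case using assms(1) by simp
  next
    case (step y z)
    then obtain v where "z = step y v" "y \<in> K" "v \<in> \<sigma> y" by (auto simp: edges_def)
    moreover have "y \<in> reach d K \<sigma>" using step.hyps(1) by (simp add: reach_def)
    ultimately show ?case using assms(2) step.IH by blast
  qed
qed

lemma reach_length: "z \<in> reach d K \<sigma> \<Longrightarrow> length z = d"
  using reach_subsetI[of d "{x. length x = d}" K \<sigma>] by auto

lemma reach_cong: "(\<And>x. x \<in> K \<Longrightarrow> \<sigma> x = \<sigma>' x) \<Longrightarrow> reach d K \<sigma> = reach d K \<sigma>'"
proof -
  assume "\<And>x. x \<in> K \<Longrightarrow> \<sigma> x = \<sigma>' x"
  then have "edges K \<sigma> = edges K \<sigma>'" unfolding edges_def by force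
  then show ?thesis by (simp add: reach_def)
qed

lemma reach_dirs: "reach d K \<sigma> = reach d K (\<lambda>z. \<sigma> z \<inter> dirs d)"
proof
  show "reach d K (\<lambda>z. \<sigma> z \<inter> dirs d) \<subseteq> reach d K \<sigma>"
    by (intro reach_mono) (auto simp: edges_def)
next
  show "reach d K \<sigma> \<subseteq> reach d K (\<lambda>z. \<sigma> z \<inter> dirs d)"
  proof (rule reach_subsetI)
    fix x v assume x: "x \<in> reach d K (\<lambda>z. \<sigma> z \<inter> dirs d)" "x \<in> K" "v \<in> \<sigma> x"
    show "step x v \<in> reach d K (\<lambda>z. \<sigma> z \<inter> dirs d)"
    proof (cases "v \<in> dirs d")
      case True then show ?thesis using x by (intro reach_step) auto
    next
      case False
      then have "length x \<le> fst v" using reach_length[OF x(1)] by (cases v) (auto simp: dirs_def)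
      then show ?thesis using x by (simp add: step_out)
    qed
  qed simp
qed

lemma Hn_box: "Hn d n \<omega> \<longleftrightarrow> (\<exists>z \<in> reach d (bx d n) \<omega>. int n \<le> nrm z)"
proof
  assume "\<exists>z \<in> reach d (bx d n) \<omega>. int n \<le> nrm z"
  moreover have "reach d (bx d n) \<omega> \<subseteq> reach d UNIV \<omega>"
    by (intro reach_mono) (auto simp: edges_def)
  ultimately show "Hn d n \<omega>" by (auto simp: Hn_def)
next
  assume H: "Hn d n \<omega>"
  show "\<exists>z \<in> reach d (bx d n) \<omega>. int n \<le> nrm z"
  proof (rule ccontr)
    assume nz: "\<not> ?thesis"
    have "reach d UNIV \<omega> \<subseteq> reach d (bx d n) \<omega>"
    proof (rule reach_subsetI)
      fix x v assume x: "x \<in> reach d (bx d n) \<omega>" "v \<in> \<omega> x"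
      then have "x \<in> bx d n" using nz reach_length[OF x(1)] by (force simp: bx_def)
      then show "step x v \<in> reach d (bx d n) \<omega>" using x by (intro reach_step)
    qed simp
    then show False using H nz by (auto simp: Hn_def)
  qed
qed



lemma edges_UNIV_iff: "(x, y) \<in> edges UNIV \<omega> \<longleftrightarrow> (\<exists>v \<in> \<omega> x. y = step x v)"
  unfolding edges_def by blast

lemma rtrancl_path_nrm:
  assumes "rtrancl_path (\<lambda>a b. (a, b) \<in> edges UNIV \<omega>) x xs y"
  shows "nrm y \<le> nrm x + int (length xs)"
  using assms
proof (induction rule: rtrancl_path.induct)
  case (base x) then show ?case by simp
next
  case (step x y ys z)
  then obtain v where "y = step x v" by (auto simp: edges_UNIV_iff)
  then have "nrm y \<le> nrm x + 1" using nrm_step by simp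
  with step.IH show ?case by simp
qed

lemma rtrancl_path_succ:
  assumes "rtrancl_path r x xs y"
  shows "successively r (x # xs) \<and> last (x # xs) = y"
  using assms
  by (induction rule: rtrancl_path.induct) (auto simp: successively_Cons)

lemma RI_imp_Hn:
  assumes "reaches_infinity d \<omega>"
  shows "Hn d n \<omega>"
proof (rule ccontr)
  assume nH: "\<not> Hn d n \<omega>"
  from assms obtain p where p: "p 0 = origin d" "inj p" "\<And>m. \<exists>v \<in> \<omega> (p m). p (Suc m) = step (p m) v"
    unfolding reaches_infinity_def by blast
  have pr: "p m \<in> reach d UNIV \<omega>" for m
  proof (induction m)
    case 0 then show ?case using p(1) by simp
  next
    case (Suc m)
    then show ?case using p(3)[of m] reach_step[of "p m" d UNIV \<omega>] by auto
  qed
  have "range p \<subseteq> bx d n"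
  proof
    fix z assume "z \<in> range p"
    then obtain m where "z = p m" by auto
    then have "z \<in> reach d UNIV \<omega>" using pr by simp
    then show "z \<in> bx d n" using nH reach_length by (force simp: Hn_def bx_def)
  qed
  then have "finite (range p)" using finite_box finite_subset by blast
  then have "finite (UNIV :: nat set)" using p(2) finite_imageD by blast
  then show False by simp
qed

definition SA :: "nat \<Rightarrow> (int list \<Rightarrow> (nat \<times> bool) set) \<Rightarrow> int list list \<Rightarrow> bool" where
  "SA d \<omega> ps \<longleftrightarrow> ps \<noteq> [] \<and> hd ps = origin d \<and> distinct ps \<and>
     successively (\<lambda>a b. (a, b) \<in> edges UNIV \<omega>) ps"

lemma SA_prefix: "SA d \<omega> (ps @ qs) \<Longrightarrow> ps \<noteq> [] \<Longrightarrow> SA d \<omega> ps"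
  unfolding SA_def by (auto simp: successively_append_iff)

definition extd :: "nat \<Rightarrow> (int list \<Rightarrow> (nat \<times> bool) set) \<Rightarrow> int list list \<Rightarrow> bool" where
  "extd d \<omega> ps \<longleftrightarrow> (\<forall>m. \<exists>qs. SA d \<omega> (ps @ qs) \<and> m \<le> length qs)"

lemma finite_range_step: "finite (range (step x))"
proof -
  have "range (step x) \<subseteq> insert x (step x ` ({..<length x} \<times> UNIV))"
  proof
    fix z assume "z \<in> range (step x)"
    then obtain v where z: "z = step x v" by auto
    show "z \<in> insert x (step x ` ({..<length x} \<times> UNIV))"
    proof (cases "fst v < length x")
      case True then show ?thesis using z by (cases v) auto
    next
      case False then show ?thesis using z by (simp add: step_out)
    qed
  qed
  moreover have "finite (insert x (step x ` ({..<length x} \<times> (UNIV :: bool set))))" by simp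
  ultimately show ?thesis by (rule finite_subset)
qed

lemma extd_step:
  assumes "extd d \<omega> ps" "ps \<noteq> []"
  shows "\<exists>c. (last ps, c) \<in> edges UNIV \<omega> \<and> extd d \<omega> (ps @ [c])"
proof (rule ccontr)
  assume "\<not> ?thesis"
  then have nc: "\<forall>c. (last ps, c) \<in> edges UNIV \<omega> \<longrightarrow> (\<exists>M. \<not> (\<exists>qs. SA d \<omega> (ps @ [c] @ qs) \<and> M \<le> length qs))"
    unfolding extd_def by auto
  define Mf where "Mf c = (SOME M. \<not> (\<exists>qs. SA d \<omega> (ps @ [c] @ qs) \<and> M \<le> length qs))" for c
  have Mf: "\<not> (\<exists>qs. SA d \<omega> (ps @ [c] @ qs) \<and> Mf c \<le> length qs)" if "(last ps, c) \<in> edges UNIV \<omega>" for c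
    unfolding Mf_def
  proof (rule someI_ex)
    show "\<exists>M. \<not> (\<exists>qs. SA d \<omega> (ps @ [c] @ qs) \<and> M \<le> length qs)" using nc that by blast
  qed
  define M0 where "M0 = (\<Sum>c\<in>range (step (last ps)). Mf c)"
  from assms(1) obtain qs where qs: "SA d \<omega> (ps @ qs)" "Suc M0 \<le> length qs"
    unfolding extd_def by blast
  then obtain c qs' where cq: "qs = c # qs'" by (cases qs) auto
  have "successively (\<lambda>a b. (a, b) \<in> edges UNIV \<omega>) (ps @ c # qs')"
    using qs(1) cq by (simp add: SA_def)
  then have ce: "(last ps, c) \<in> edges UNIV \<omega>"
    using assms(2) by (simp add: successively_append_iff)
  then have "c \<in> range (step (last ps))" by (auto simp: edges_UNIV_iff)
  then have "Mf c \<le> M0" unfolding M0_def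
    by (intro member_le_sum) (auto intro: finite_range_step)
  then have "SA d \<omega> (ps @ [c] @ qs') \<and> Mf c \<le> length qs'" using qs cq by simp
  then show False using Mf[OF ce] by blast
qed

lemma Hn_imp_ext:
  assumes "\<forall>n. Hn d n \<omega>"
  shows "extd d \<omega> [origin d]"
  unfolding extd_def
proof
  fix m
  obtain z where z: "z \<in> reach d UNIV \<omega>" "int m \<le> nrm z" using assms by (auto simp: Hn_def)
  then have "(\<lambda>a b. (a, b) \<in> edges UNIV \<omega>)\<^sup>*\<^sup>* (origin d) z"
    by (simp add: reach_def rtranclp_rtrancl_eq)
  then obtain xs where "rtrancl_path (\<lambda>a b. (a, b) \<in> edges UNIV \<omega>) (origin d) xs z"
    by (auto simp: rtranclp_eq_rtrancl_path)
  then obtain xs' where xs': "rtrancl_path (\<lambda>a b. (a, b) \<in> edges UNIV \<omega>) (origin d) xs' z"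
    "distinct (origin d # xs')"
    by (rule rtrancl_path_distinct)
  have "nrm z \<le> int (length xs')" using rtrancl_path_nrm[OF xs'(1)] by simp
  then have "m \<le> length xs'" using z(2) by simp
  moreover have "SA d \<omega> ([origin d] @ xs')"
    using xs' rtrancl_path_succ[OF xs'(1)] by (simp add: SA_def)
  ultimately show "\<exists>qs. SA d \<omega> ([origin d] @ qs) \<and> m \<le> length qs" by blast
qed

lemma Hn_imp_RI:
  assumes "\<forall>n. Hn d n \<omega>"
  shows "reaches_infinity d \<omega>"
proof -
  define nx where "nx ps = (SOME c. (last ps, c) \<in> edges UNIV \<omega> \<and> extd d \<omega> (ps @ [c]))" for ps
  define pth where "pth = rec_nat [origin d] (\<lambda>m ps. ps @ [nx ps])"
  have pth0: "pth 0 = [origin d]" and pthS: "pth (Suc m) = pth m @ [nx (pth m)]" for m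
    by (simp_all add: pth_def)
  have inv: "extd d \<omega> (pth m) \<and> length (pth m) = Suc m" for m
  proof (induction m)
    case 0 then show ?case using Hn_imp_ext[OF assms] pth0 by simp
  next
    case (Suc m)
    then have ne: "pth m \<noteq> []" by auto
    from extd_step[OF conjunct1[OF Suc] ne] have
      "(last (pth m), nx (pth m)) \<in> edges UNIV \<omega> \<and> extd d \<omega> (pth m @ [nx (pth m)])"
      unfolding nx_def by (rule someI_ex)
    then show ?case using Suc pthS by simp
  qed
  have edge: "(last (pth m), nx (pth m)) \<in> edges UNIV \<omega>" for m
  proof -
    have ne: "pth m \<noteq> []" using inv[of m] by auto
    from extd_step[OF conjunct1[OF inv[of m]] ne] show ?thesis
      unfolding nx_def by (rule someI_ex[THEN conjunct1])
  qed
  define p where "p m = last (pth m)" for m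
  have nth: "i \<le> m \<Longrightarrow> pth m ! i = p i" for i m
  proof (induction m)
    case 0 then show ?case by (simp add: p_def pth0)
  next
    case (Suc m)
    show ?case
    proof (cases "i = Suc m")
      case True
      then show ?thesis using inv[of m] by (simp add: p_def pthS nth_append)
    next
      case False
      then have "i \<le> m" using Suc.prems by simp
      then show ?thesis using Suc.IH inv[of m] by (simp add: pthS nth_append)
    qed
  qed
  have "SA d \<omega> (pth m)" for m
  proof -
    obtain qs where "SA d \<omega> (pth m @ qs)" using conjunct1[OF inv[of m]] unfolding extd_def by blast
    moreover have "pth m \<noteq> []" using inv[of m] by auto
    ultimately show ?thesis by (rule SA_prefix)
  qed
  then have dist: "distinct (pth m)" for m by (simp add: SA_def)
  have "p 0 = origin d" by (simp add: p_def pth0)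
  moreover have "inj p"
  proof (rule injI)
    fix i j assume "p i = p j"
    show "i = j"
    proof (rule ccontr)
      assume "i \<noteq> j"
      define m where "m = max i j"
      have "pth m ! i = pth m ! j" using nth[of i m] nth[of j m] \<open>p i = p j\<close> by (simp add: m_def)
      moreover have "i < length (pth m)" "j < length (pth m)" using inv[of m] by (auto simp: m_def)
      ultimately show False using dist[of m] \<open>i \<noteq> j\<close> by (simp add: nth_eq_iff_index_eq)
    qed
  qed
  moreover have "\<exists>v \<in> \<omega> (p m). p (Suc m) = step (p m) v" for m
  proof -
    have "p (Suc m) = nx (pth m)" by (simp add: p_def pthS)
    then show ?thesis using edge[of m] by (simp add: p_def edges_UNIV_iff)
  qed
  ultimately show ?thesis unfolding reaches_infinity_def by blast
qed

lemma RI_iff: "reaches_infinity d \<omega> \<longleftrightarrow> (\<forall>n. Hn d n \<omega>)"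
  using RI_imp_Hn Hn_imp_RI by blast



lemma transfer_lemma:
  fixes q :: "'b set pmf" and I B :: "'i set" and D :: "'b set"
    and g :: "('i \<Rightarrow> 'b set) \<Rightarrow> bool"
  assumes B: "finite B" "B \<subseteq> I" and D: "finite D"
    and g: "\<And>\<omega> \<omega>'. (\<And>z. z \<in> B \<Longrightarrow> \<omega> z \<inter> D = \<omega>' z \<inter> D) \<Longrightarrow> g \<omega> = g \<omega>'"
  shows "{\<omega> \<in> space (PiM I (\<lambda>_. measure_pmf q)). g \<omega>} \<in> sets (PiM I (\<lambda>_. measure_pmf q))"
    and "measure (PiM I (\<lambda>_. measure_pmf q)) {\<omega> \<in> space (PiM I (\<lambda>_. measure_pmf q)). g \<omega>}
       = measure_pmf.prob (Pi_pmf B dflt (\<lambda>_. q)) {\<omega>. g \<omega>}"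
proof -
  let ?M = "\<lambda>_::'i. measure_pmf q"
  let ?P = "PiM I ?M"
  interpret P: product_prob_space ?M I
    by unfold_locales
  define X where "X = PiE B (\<lambda>_. Pow D)"
  define Xg where "Xg = {\<tau> \<in> X. g \<tau>}"
  define Cyl where "Cyl \<tau> = {\<omega>. \<forall>z\<in>B. \<omega> z \<in> {A. A \<inter> D = \<tau> z}}" for \<tau>
  have "finite X" unfolding X_def using B D by (intro finite_PiE) auto
  then have finX: "finite Xg" unfolding Xg_def by simp
  have cover: "{\<omega>. g \<omega>} = (\<Union>\<tau>\<in>Xg. Cyl \<tau>)"
  proof (intro set_eqI iffI)
    fix \<omega> assume "\<omega> \<in> {\<omega>. g \<omega>}"
    define \<tau> where "\<tau> = restrict (\<lambda>z. \<omega> z \<inter> D) B"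
    have "\<tau> \<in> X" unfolding \<tau>_def X_def by auto
    moreover have "g \<tau> = g \<omega>" by (rule g) (auto simp: \<tau>_def)
    moreover have "\<omega> \<in> Cyl \<tau>" by (auto simp: Cyl_def \<tau>_def)
    ultimately show "\<omega> \<in> (\<Union>\<tau>\<in>Xg. Cyl \<tau>)" using \<open>\<omega> \<in> {\<omega>. g \<omega>}\<close> by (auto simp: Xg_def)
  next
    fix \<omega> assume "\<omega> \<in> (\<Union>\<tau>\<in>Xg. Cyl \<tau>)"
    then obtain \<tau> where t: "\<tau> \<in> X" "g \<tau>" "\<omega> \<in> Cyl \<tau>" by (auto simp: Xg_def)
    have "g \<omega> = g \<tau>"
    proof (rule g)
      fix z assume "z \<in> B"
      then show "\<omega> z \<inter> D = \<tau> z \<inter> D" using t by (auto simp: Cyl_def X_def)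
    qed
    then show "\<omega> \<in> {\<omega>. g \<omega>}" using t by simp
  qed
  have disj: "disjoint_family_on Cyl Xg"
    unfolding disjoint_family_on_def
  proof (intro ballI impI)
    fix \<tau> \<tau>' assume "\<tau> \<in> Xg" "\<tau>' \<in> Xg" "\<tau> \<noteq> \<tau>'"
    then obtain z where "z \<in> B" "\<tau> z \<noteq> \<tau>' z" unfolding Xg_def X_def
      by (metis (mono_tags, lifting) PiE_ext mem_Collect_eq)
    then show "Cyl \<tau> \<inter> Cyl \<tau>' = {}" by (auto simp: Cyl_def)
  qed
  have emb: "space ?P \<inter> Cyl \<tau> = prod_emb I ?M B (PiE B (\<lambda>z. {A. A \<inter> D = \<tau> z}))" for \<tau>
    using B by (auto simp: prod_emb_def space_PiM Cyl_def PiE_def Pi_def extensional_def)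
  have setsC: "space ?P \<inter> Cyl \<tau> \<in> sets ?P" for \<tau>
    unfolding emb using B by (intro sets_PiM_I) auto
  have eq1: "{\<omega> \<in> space ?P. g \<omega>} = (\<Union>\<tau>\<in>Xg. space ?P \<inter> Cyl \<tau>)"
    using cover by blast
  show "{\<omega> \<in> space ?P. g \<omega>} \<in> sets ?P"
    unfolding eq1 using finX setsC by blast
  have "measure ?P {\<omega> \<in> space ?P. g \<omega>} = (\<Sum>\<tau>\<in>Xg. measure ?P (space ?P \<inter> Cyl \<tau>))"
    unfolding eq1 using finX setsC disj
    by (intro P.finite_measure_finite_Union) (auto simp: disjoint_family_on_def)
  also have "\<dots> = (\<Sum>\<tau>\<in>Xg. \<Prod>z\<in>B. measure_pmf.prob q {A. A \<inter> D = \<tau> z})"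
    unfolding emb using B by (intro sum.cong refl P.measure_PiM_emb) auto
  also have "\<dots> = (\<Sum>\<tau>\<in>Xg. measure_pmf.prob (Pi_pmf B dflt (\<lambda>_. q)) (Cyl \<tau>))"
  proof (intro sum.cong refl)
    fix \<tau>
    have "Cyl \<tau> = Pi B (\<lambda>z. {A. A \<inter> D = \<tau> z})" by (auto simp: Cyl_def Pi_def)
    then show "(\<Prod>z\<in>B. measure_pmf.prob q {A. A \<inter> D = \<tau> z}) = measure_pmf.prob (Pi_pmf B dflt (\<lambda>_. q)) (Cyl \<tau>)"
      using B by (simp add: measure_Pi_pmf_Pi)
  qed
  also have "\<dots> = measure_pmf.prob (Pi_pmf B dflt (\<lambda>_. q)) (\<Union>\<tau>\<in>Xg. Cyl \<tau>)"
    using finX disj by (intro measure_pmf.finite_measure_finite_Union[symmetric]) auto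
  also have "\<dots> = measure_pmf.prob (Pi_pmf B dflt (\<lambda>_. q)) {\<omega>. g \<omega>}"
    using cover by simp
  finally show "measure ?P {\<omega> \<in> space ?P. g \<omega>} = measure_pmf.prob (Pi_pmf B dflt (\<lambda>_. q)) {\<omega>. g \<omega>}" .
qed

lemma Hn_local:
  assumes "\<And>z. z \<in> bx d n \<Longrightarrow> \<omega> z \<inter> dirs d = \<omega>' z \<inter> dirs d"
  shows "Hn d n \<omega> = Hn d n \<omega>'"
proof -
  have "reach d (bx d n) \<omega> = reach d (bx d n) (\<lambda>z. \<omega> z \<inter> dirs d)" by (rule reach_dirs)
  also have "\<dots> = reach d (bx d n) (\<lambda>z. \<omega>' z \<inter> dirs d)" using assms by (intro reach_cong) auto
  also have "\<dots> = reach d (bx d n) \<omega>'" by (rule reach_dirs[symmetric])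
  finally show ?thesis by (simp add: Hn_box)
qed

lemma finite_dirs: "finite (dirs d)"
  by (simp add: dirs_def)

lemma bx_lattice: "bx d n \<subseteq> lattice d"
  by (auto simp: bx_def lattice_def)

lemma theta_prob:
  "measure (DnG k d) {\<omega> \<in> space (DnG k d). Hn d n \<omega>}
     = measure_pmf.prob (Pi_pmf (bx d n) {} (\<lambda>_. choice_pmf k d)) {\<omega>. Hn d n \<omega>}"
  unfolding DnG_def
  by (rule transfer_lemma(2)[OF finite_box bx_lattice finite_dirs]) (rule Hn_local)

lemma theta_lim:
  "(\<lambda>n. measure (DnG k d) {\<omega> \<in> space (DnG k d). Hn d n \<omega>}) \<longlonglongrightarrow> thetaD k d"
proof -
  let ?M = "\<lambda>_::int list. measure_pmf (choice_pmf k d)"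
  interpret P: product_prob_space ?M "lattice d"
    by unfold_locales
  define A where "A n = {\<omega> \<in> space (DnG k d). Hn d n \<omega>}" for n
  have sets: "range A \<subseteq> sets (DnG k d)"
    unfolding A_def DnG_def
    using transfer_lemma(1)[OF finite_box bx_lattice finite_dirs, where g = "Hn d n" for n] Hn_local
    by blast
  have dec: "decseq A"
    unfolding decseq_def A_def Hn_def
    by (auto, meson order_trans of_nat_mono)
  have "(\<lambda>n. measure (DnG k d) (A n)) \<longlonglongrightarrow> measure (DnG k d) (\<Inter> (range A))"
    using sets dec unfolding DnG_def
    by (intro P.finite_Lim_measure_decseq) auto
  moreover have "\<Inter> (range A) = {\<omega> \<in> space (DnG k d). reaches_infinity d \<omega>}"
    unfolding A_def using RI_iff by auto
  ultimately show ?thesis unfolding A_def thetaD_def by simp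
qed



lemma prob_pair_of_set:
  assumes A: "A \<noteq> {}" "finite A"
  shows "measure_pmf.prob (pair_pmf (pmf_of_set A) r) E
     = (\<Sum>a\<in>A. measure_pmf.prob r {g. (a, g) \<in> E}) / real (card A)"
proof -
  have "ennreal (measure_pmf.prob (pair_pmf (pmf_of_set A) r) E)
      = emeasure (measure_pmf (pair_pmf (pmf_of_set A) r)) E"
    by (simp add: measure_pmf.emeasure_eq_measure)
  also have "\<dots> = (\<integral>\<^sup>+a. emeasure (measure_pmf (map_pmf (Pair a) r)) E \<partial>measure_pmf (pmf_of_set A))"
    by (simp add: pair_pmf_def map_pmf_def)
  also have "\<dots> = (\<Sum>a\<in>A. emeasure (measure_pmf (map_pmf (Pair a) r)) E) / of_nat (card A)"
    using A by (rule nn_integral_pmf_of_set)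
  also have "\<dots> = (\<Sum>a\<in>A. ennreal (measure_pmf.prob r {g. (a, g) \<in> E})) / of_nat (card A)"
    by (intro arg_cong2[where f = "(/)"] sum.cong refl)
       (simp add: measure_pmf.emeasure_eq_measure vimage_def)
  also have "\<dots> = ennreal ((\<Sum>a\<in>A. measure_pmf.prob r {g. (a, g) \<in> E}) / real (card A))"
    using A by (simp add: sum_ennreal ennreal_of_nat_eq_real_of_nat)
      (rule divide_ennreal, auto intro: sum_nonneg simp: card_gt_0_iff)
  finally show ?thesis
    by (subst (asm) ennreal_inj) (auto intro!: divide_nonneg_nonneg sum_nonneg)
qed

definition W :: "'i set \<Rightarrow> 'a pmf \<Rightarrow> 'a \<Rightarrow> (('i \<Rightarrow> 'a) \<Rightarrow> bool) \<Rightarrow> 'i set \<Rightarrow> ('i \<Rightarrow> 'a) \<Rightarrow> real" where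
  "W J q dflt f K \<sigma> = measure_pmf.prob (Pi_pmf (J - K) dflt (\<lambda>_. q))
      {\<omega>. f (\<lambda>x. if x \<in> K then \<sigma> x else \<omega> x)}"

lemma W_FI:
  assumes J: "finite J" "i \<in> J" "i \<notin> K" and A: "A \<noteq> {}" "finite A"
  shows "W J (pmf_of_set A) dflt f K \<sigma>
       = (\<Sum>a\<in>A. W J (pmf_of_set A) dflt f (insert i K) (\<sigma>(i := a))) / real (card A)"
proof -
  let ?q = "pmf_of_set A"
  have JK: "J - K = insert i (J - insert i K)" using J by auto
  have fin: "finite (J - insert i K)" using J by simp
  have "W J ?q dflt f K \<sigma> = measure_pmf.prob
      (map_pmf (\<lambda>(y, g). g(i := y)) (pair_pmf ?q (Pi_pmf (J - insert i K) dflt (\<lambda>_. ?q))))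
      {\<omega>. f (\<lambda>x. if x \<in> K then \<sigma> x else \<omega> x)}"
    unfolding W_def JK by (subst Pi_pmf_insert[OF fin]) auto
  also have "\<dots> = (\<Sum>a\<in>A. measure_pmf.prob (Pi_pmf (J - insert i K) dflt (\<lambda>_. ?q))
      {g. (a, g) \<in> (\<lambda>(y, g). g(i := y)) -` {\<omega>. f (\<lambda>x. if x \<in> K then \<sigma> x else \<omega> x)}}) / real (card A)"
    by (simp only: measure_map_pmf prob_pair_of_set[OF A])
  also have "\<dots> = (\<Sum>a\<in>A. W J ?q dflt f (insert i K) (\<sigma>(i := a))) / real (card A)"
  proof -
    have "{g. (a, g) \<in> (\<lambda>(y, g). g(i := y)) -` {\<omega>. f (\<lambda>x. if x \<in> K then \<sigma> x else \<omega> x)}}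
        = {g. f (\<lambda>x. if x \<in> insert i K then (\<sigma>(i := a)) x else g x)}" for a
    proof -
      have "(\<lambda>x. if x \<in> K then \<sigma> x else (g(i := a)) x) = (\<lambda>x. if x \<in> insert i K then (\<sigma>(i := a)) x else g x)" for g
        using J(3) by (auto simp: fun_eq_iff)
      then show ?thesis by auto
    qed
    then show ?thesis unfolding W_def by simp
  qed
  finally show ?thesis .
qed

lemma W_one:
  assumes "\<And>\<omega>. f (\<lambda>x. if x \<in> K then \<sigma> x else \<omega> x)"
  shows "W J q dflt f K \<sigma> = 1"
  unfolding W_def using assms by (simp add: measure_pmf.prob_space)

lemma W_zero:
  assumes "\<And>\<omega>. \<not> f (\<lambda>x. if x \<in> K then \<sigma> x else \<omega> x)"
  shows "W J q dflt f K \<sigma> = 0"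
  unfolding W_def using assms by simp

lemma W_le_one: "W J q dflt f K \<sigma> \<le> 1"
  unfolding W_def by simp

lemma W_nonneg: "0 \<le> W J q dflt f K \<sigma>"
  unfolding W_def by simp

lemma W_empty: "W J q dflt f {} \<sigma> = measure_pmf.prob (Pi_pmf J dflt (\<lambda>_. q)) {\<omega>. f \<omega>}"
  unfolding W_def by simp



lemma dirs_Suc: "dirs (Suc d) = insert (d, True) (insert (d, False) (dirs d))"
  by (auto simp: dirs_def less_Suc_eq)

lemma vert_notin: "(d, b) \<notin> dirs d"
  by (simp add: dirs_def)

lemma card_dirs: "card (dirs d) = 2 * d"
  by (simp add: dirs_def card_cartesian_product)

lemma finite_dirs': "finite (dirs d)"
  by (simp add: dirs_def)

definition Ck :: "nat \<Rightarrow> nat \<Rightarrow> (nat \<times> bool) set set" where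
  "Ck k d = {T. T \<subseteq> dirs d \<and> card T = k}"

definition bad :: "nat \<Rightarrow> (nat \<times> bool) set \<Rightarrow> bool" where
  "bad d S \<longleftrightarrow> (d, True) \<in> S \<and> (d, False) \<in> S"

definition msub :: "nat \<Rightarrow> nat \<Rightarrow> (nat \<times> bool) set \<Rightarrow> real" where
  "msub k d S = real (card {T \<in> Ck k d. T \<subseteq> S})"

lemma finite_Ck: "finite (Ck k d)"
proof -
  have "Ck k d \<subseteq> Pow (dirs d)" by (auto simp: Ck_def)
  moreover have "finite (Pow (dirs d))" using finite_dirs' by simp
  ultimately show ?thesis by (rule finite_subset)
qed

lemma Ck_nonempty: "k \<le> 2 * d \<Longrightarrow> Ck k d \<noteq> {}"
proof -
  assume "k \<le> 2 * d"
  then have "k \<le> card (dirs d)" by (simp add: card_dirs)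
  then obtain T where "T \<subseteq> dirs d" "card T = k" by (rule obtain_subset_with_card_n)
  then show ?thesis by (auto simp: Ck_def)
qed

lemma good_msub_pos:
  assumes S: "S \<in> Ck (Suc k) (Suc d)" "\<not> bad d S"
  shows "\<exists>T \<in> Ck k d. T \<subseteq> S"
proof -
  have fin: "finite S" using S finite_dirs'[of "Suc d"] by (auto simp: Ck_def intro: finite_subset)
  have "S - dirs d \<subseteq> {(d, True), (d, False)}" using S by (auto simp: Ck_def dirs_Suc)
  then have "S - dirs d \<subseteq> {(d, True)} \<or> S - dirs d \<subseteq> {(d, False)}" using S(2) by (auto simp: bad_def)
  moreover have "card (S - dirs d) \<le> 1" if "S - dirs d \<subseteq> {a}" for a
  proof -
    have "card (S - dirs d) \<le> card {a}" using that by (intro card_mono) auto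
    then show ?thesis by simp
  qed
  ultimately have "card (S - dirs d) \<le> 1" by blast
  moreover have "card S = card (S \<inter> dirs d) + card (S - dirs d)"
    using fin by (rule card_Int_Diff)
  moreover have "card S = Suc k" using S by (simp add: Ck_def)
  ultimately have "k \<le> card (S \<inter> dirs d)" by simp
  then obtain T where "T \<subseteq> S \<inter> dirs d" "card T = k" by (rule obtain_subset_with_card_n)
  then show ?thesis by (auto simp: Ck_def)
qed

lemma c_const:
  assumes T: "T \<in> Ck k d" and k: "k \<le> 2 * d"
  shows "(\<Sum>S \<in> {S \<in> Ck (Suc k) (Suc d). \<not> bad d S \<and> T \<subseteq> S}. 1 / msub k d S)
       = 2 + real (2 * d - k) / real (Suc k)"
proof -
  have Td: "T \<subseteq> dirs d" "card T = k" using T by (auto simp: Ck_def)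
  have finT: "finite T" using Td finite_dirs' finite_subset by blast
  have vT: "(d, b) \<notin> T" for b using Td vert_notin by blast
  let ?A = "dirs (Suc d) - T"
  have img: "{S \<in> Ck (Suc k) (Suc d). \<not> bad d S \<and> T \<subseteq> S} = (\<lambda>z. insert z T) ` ?A"
  proof (intro set_eqI iffI)
    fix S assume S: "S \<in> {S \<in> Ck (Suc k) (Suc d). \<not> bad d S \<and> T \<subseteq> S}"
    then have finS: "finite S" using finite_dirs'[of "Suc d"] by (auto simp: Ck_def intro: finite_subset)
    have "card (S - T) = card S - card T" using S finT by (intro card_Diff_subset) auto
    then have "card (S - T) = 1" using S Td by (simp add: Ck_def)
    then obtain z where z: "S - T = {z}" by (auto simp: card_Suc_eq)
    then have "S = insert z T" using S by auto
    moreover have "z \<in> ?A" using z S by (auto simp: Ck_def)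
    ultimately show "S \<in> (\<lambda>z. insert z T) ` ?A" by blast
  next
    fix S assume "S \<in> (\<lambda>z. insert z T) ` ?A"
    then obtain z where z: "z \<in> ?A" "S = insert z T" by auto
    have "S \<subseteq> dirs (Suc d)" using z Td by (auto simp: dirs_Suc)
    moreover have "card S = Suc k" using z finT Td by simp
    moreover have "\<not> bad d S" using z vT by (auto simp: bad_def)
    ultimately show "S \<in> {S \<in> Ck (Suc k) (Suc d). \<not> bad d S \<and> T \<subseteq> S}" using z by (auto simp: Ck_def)
  qed
  have inj: "inj_on (\<lambda>z. insert z T) ?A"
  proof (rule inj_onI)
    fix z z' assume z: "z \<in> ?A" "z' \<in> ?A" "insert z T = insert z' T"
    then have "z \<in> insert z' T" by blast
    then show "z = z'" using z(1) by auto
  qed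
  have m1: "msub k d (insert z T) = real (Suc k)" if z: "z \<in> dirs d - T" for z
  proof -
    have "{T' \<in> Ck k d. T' \<subseteq> insert z T} = {T'. T' \<subseteq> insert z T \<and> card T' = k}"
      using z Td by (auto simp: Ck_def)
    moreover have "card {T'. T' \<subseteq> insert z T \<and> card T' = k} = Suc k"
      using z finT Td by (simp add: n_subsets)
    ultimately show ?thesis by (simp add: msub_def)
  qed
  have m2: "msub k d (insert (d, b) T) = 1" for b
  proof -
    have "{T' \<in> Ck k d. T' \<subseteq> insert (d, b) T} = {T}"
    proof (intro set_eqI iffI)
      fix T' assume "T' \<in> {T' \<in> Ck k d. T' \<subseteq> insert (d, b) T}"
      then have "T' \<subseteq> T" "card T' = card T" using vert_notin[of d b] Td by (auto simp: Ck_def)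
      then show "T' \<in> {T}" using finT card_subset_eq by blast
    qed (use T in auto)
    then show ?thesis by (simp add: msub_def)
  qed
  have split: "?A = (dirs d - T) \<union> {(d, True), (d, False)}"
    using vT by (auto simp: dirs_Suc)
  have "(\<Sum>S \<in> {S \<in> Ck (Suc k) (Suc d). \<not> bad d S \<and> T \<subseteq> S}. 1 / msub k d S)
      = (\<Sum>z \<in> ?A. 1 / msub k d (insert z T))"
    unfolding img using inj by (simp add: sum.reindex)
  also have "\<dots> = (\<Sum>z \<in> dirs d - T. 1 / msub k d (insert z T)) + (\<Sum>z \<in> {(d, True), (d, False)}. 1 / msub k d (insert z T))"
    unfolding split using finite_dirs'[of d] vert_notin[of d] by (intro sum.union_disjoint) auto
  also have "(\<Sum>z \<in> dirs d - T. 1 / msub k d (insert z T)) = (\<Sum>z \<in> dirs d - T. 1 / real (Suc k))"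
    using m1 by simp
  also have "\<dots> = real (2 * d - k) / real (Suc k)"
    using Td finT by (simp add: card_Diff_subset card_dirs)
  also have "(\<Sum>z \<in> {(d, True), (d, False)}. 1 / msub k d (insert z T)) = 2"
    using m2 by simp
  finally show ?thesis by simp
qed

lemma counting:
  fixes \<phi> \<psi> :: "(nat \<times> bool) set \<Rightarrow> real" and w :: real
  assumes k: "k \<le> 2 * d"
    and bd: "\<And>S. S \<in> Ck (Suc k) (Suc d) \<Longrightarrow> bad d S \<Longrightarrow> w \<le> \<psi> S"
    and gd: "\<And>S T. S \<in> Ck (Suc k) (Suc d) \<Longrightarrow> \<not> bad d S \<Longrightarrow> T \<in> Ck k d \<Longrightarrow> T \<subseteq> S \<Longrightarrow> \<phi> T \<le> \<psi> S"
    and w: "w = sum \<phi> (Ck k d) / real (card (Ck k d))"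
  shows "w \<le> sum \<psi> (Ck (Suc k) (Suc d)) / real (card (Ck (Suc k) (Suc d)))"
proof -
  define C1 where "C1 = Ck (Suc k) (Suc d)"
  define G where "G = {S \<in> C1. \<not> bad d S}"
  define Bd where "Bd = {S \<in> C1. bad d S}"
  define c0 where "c0 = 2 + real (2 * d - k) / real (Suc k)"
  have finC1: "finite C1" unfolding C1_def by (rule finite_Ck)
  have finG: "finite G" "finite Bd" using finC1 by (auto simp: G_def Bd_def)
  have C0: "card (Ck k d) > 0" using Ck_nonempty[OF k] finite_Ck by (simp add: card_gt_0_iff)
  have C1ne: "C1 \<noteq> {}" unfolding C1_def using Ck_nonempty[of "Suc k" "Suc d"] k by simp
  have mpos: "msub k d S > 0" if "S \<in> G" for S
  proof -
    from good_msub_pos[of S k d] that obtain T where "T \<in> Ck k d" "T \<subseteq> S"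
      by (auto simp: G_def C1_def)
    then have "{T \<in> Ck k d. T \<subseteq> S} \<noteq> {}" by blast
    then show ?thesis unfolding msub_def using finite_Ck[of k d] by (simp add: card_gt_0_iff)
  qed
  have swap: "(\<Sum>S\<in>G. (\<Sum>T \<in> {T \<in> Ck k d. T \<subseteq> S}. f T) / msub k d S) = (\<Sum>T\<in>Ck k d. f T * c0)" for f
  proof -
    have "(\<Sum>S\<in>G. (\<Sum>T \<in> {T \<in> Ck k d. T \<subseteq> S}. f T) / msub k d S)
        = (\<Sum>S\<in>G. \<Sum>T \<in> {T \<in> Ck k d. T \<subseteq> S}. f T / msub k d S)"
      by (simp add: sum_divide_distrib)
    also have "\<dots> = (\<Sum>T\<in>Ck k d. \<Sum>S | S \<in> G \<and> T \<subseteq> S. f T / msub k d S)"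
      using sum.swap_restrict[OF finG(1) finite_Ck, where g="\<lambda>S T. f T / msub k d S" and R="\<lambda>S T. T \<subseteq> S"] by simp
    also have "\<dots> = (\<Sum>T\<in>Ck k d. f T * (\<Sum>S \<in> {S \<in> C1. \<not> bad d S \<and> T \<subseteq> S}. 1 / msub k d S))"
      by (intro sum.cong refl) (auto simp: sum_distrib_left G_def intro!: sum.cong)
    also have "\<dots> = (\<Sum>T\<in>Ck k d. f T * c0)"
      using c_const k unfolding c0_def C1_def by (intro sum.cong refl) auto
    finally show ?thesis .
  qed
  have cardG: "real (card G) = c0 * real (card (Ck k d))"
  proof -
    have "(\<Sum>S\<in>G. (\<Sum>T \<in> {T \<in> Ck k d. T \<subseteq> S}. 1) / msub k d S) = (\<Sum>S\<in>G. 1)"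
    proof (intro sum.cong refl)
      fix S assume "S \<in> G"
      then show "(\<Sum>T \<in> {T \<in> Ck k d. T \<subseteq> S}. 1) / msub k d S = 1"
        using mpos[of S] unfolding msub_def by simp
    qed
    then have "real (card G) = (\<Sum>S\<in>G. (\<Sum>T \<in> {T \<in> Ck k d. T \<subseteq> S}. 1) / msub k d S)"
      by simp
    also have "\<dots> = (\<Sum>T\<in>Ck k d. 1 * c0)" by (rule swap)
    finally show ?thesis by simp
  qed
  have sG: "c0 * sum \<phi> (Ck k d) \<le> sum \<psi> G"
  proof -
    have "c0 * sum \<phi> (Ck k d) = (\<Sum>S\<in>G. (\<Sum>T \<in> {T \<in> Ck k d. T \<subseteq> S}. \<phi> T) / msub k d S)"
      by (simp add: swap sum_distrib_left mult.commute)
    also have "\<dots> \<le> (\<Sum>S\<in>G. \<psi> S)"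
    proof (rule sum_mono)
      fix S assume S: "S \<in> G"
      have "(\<Sum>T \<in> {T \<in> Ck k d. T \<subseteq> S}. \<phi> T) \<le> (\<Sum>T \<in> {T \<in> Ck k d. T \<subseteq> S}. \<psi> S)"
        using S gd by (intro sum_mono) (auto simp: G_def C1_def)
      also have "\<dots> = msub k d S * \<psi> S" by (simp add: msub_def)
      finally show "(\<Sum>T \<in> {T \<in> Ck k d. T \<subseteq> S}. \<phi> T) / msub k d S \<le> \<psi> S"
        using mpos[OF S] by (simp add: divide_le_eq mult.commute)
    qed
    finally show ?thesis .
  qed
  have sB: "real (card Bd) * w \<le> sum \<psi> Bd"
  proof -
    have "real (card Bd) * w = (\<Sum>S\<in>Bd. w)" by simp
    also have "\<dots> \<le> sum \<psi> Bd" using bd by (intro sum_mono) (auto simp: Bd_def C1_def)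
    finally show ?thesis .
  qed
  have C1eq: "C1 = G \<union> Bd" "G \<inter> Bd = {}" by (auto simp: G_def Bd_def)
  have "sum \<psi> C1 = sum \<psi> G + sum \<psi> Bd" unfolding C1eq(1) using finG C1eq(2) by (rule sum.union_disjoint)
  moreover have "card C1 = card G + card Bd" unfolding C1eq(1) using finG C1eq(2) by (rule card_Un_disjoint)
  moreover have "c0 * sum \<phi> (Ck k d) = real (card G) * w"
    using cardG w C0 by simp
  ultimately have "real (card C1) * w \<le> sum \<psi> C1"
    using sG sB by (simp add: algebra_simps)
  moreover have "card C1 > 0" using C1ne finC1 by (simp add: card_gt_0_iff)
  ultimately show ?thesis unfolding C1_def by (simp add: le_divide_eq mult.commute)
qed



definition mg :: "('i \<Rightarrow> 'a) \<Rightarrow> 'i set \<Rightarrow> ('i \<Rightarrow> 'a) \<Rightarrow> 'i \<Rightarrow> 'a" where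
  "mg \<sigma> K \<omega> = (\<lambda>x. if x \<in> K then \<sigma> x else \<omega> x)"

definition Inv :: "nat \<Rightarrow> int list set \<Rightarrow> (int list \<Rightarrow> (nat \<times> bool) set)
    \<Rightarrow> int list set \<Rightarrow> (int list \<Rightarrow> (nat \<times> bool) set) \<Rightarrow> (int list \<Rightarrow> int) \<Rightarrow> bool" where
  "Inv d K \<sigma> K' \<sigma>' L \<longleftrightarrow>
     K \<subseteq> reach d K \<sigma> \<and>
     (\<forall>y \<in> reach d K \<sigma>. y @ [L y] \<in> reach (Suc d) K' \<sigma>') \<and>
     (\<forall>y h. y @ [h] \<in> K' \<longrightarrow> y \<in> reach d K \<sigma> \<and> (y \<notin> K \<longrightarrow> h < L y))"

lemma reach_mg: "reach d K \<sigma> \<subseteq> reach d UNIV (mg \<sigma> K \<omega>)"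
  by (intro reach_mono) (auto simp: edges_def mg_def)

lemma reach_mg_closed:
  assumes "reach d K \<sigma> \<subseteq> K"
  shows "reach d UNIV (mg \<sigma> K \<omega>) \<subseteq> reach d K \<sigma>"
proof (rule reach_subsetI)
  fix x v assume x: "x \<in> reach d K \<sigma>" "v \<in> mg \<sigma> K \<omega> x"
  then have "x \<in> K" using assms by blast
  then show "step x v \<in> reach d K \<sigma>" using x by (intro reach_step) (auto simp: mg_def)
qed simp

lemma reach_ext:
  assumes "K \<subseteq> reach d K \<sigma>"
  shows "reach d (insert y K) (\<sigma>(y := T)) \<subseteq> reach d K \<sigma> \<union> step y ` T"
proof (rule reach_subsetI)
  fix x v assume x: "x \<in> reach d K \<sigma> \<union> step y ` T" "x \<in> insert y K" "v \<in> (\<sigma>(y := T)) x"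
  show "step x v \<in> reach d K \<sigma> \<union> step y ` T"
  proof (cases "x = y")
    case True then show ?thesis using x by auto
  next
    case False
    then have "x \<in> K" "v \<in> \<sigma> x" using x by auto
    then show ?thesis using assms by (auto intro: reach_step)
  qed
qed simp

lemma inv_bad:
  assumes I: "Inv d K \<sigma> K' \<sigma>' L" and y: "y \<in> reach d K \<sigma>" "y \<notin> K" "y @ [L y] \<notin> K'"
    and S: "(d, True) \<in> S"
  shows "Inv d K \<sigma> (insert (y @ [L y]) K') (\<sigma>'(y @ [L y] := S)) (L(y := L y + 1))"
proof -
  let ?K' = "insert (y @ [L y]) K'" and ?s' = "\<sigma>'(y @ [L y] := S)"
  have mono: "reach (Suc d) K' \<sigma>' \<subseteq> reach (Suc d) ?K' ?s'" using y(3) by (rule reach_upd)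
  have ly: "length y = d" using reach_length[OF y(1)] .
  have "y @ [L y] \<in> reach (Suc d) ?K' ?s'" using I y(1) mono by (auto simp: Inv_def)
  then have "step (y @ [L y]) (d, True) \<in> reach (Suc d) ?K' ?s'"
    using S by (intro reach_step) auto
  then have yn: "y @ [L y + 1] \<in> reach (Suc d) ?K' ?s'" using step_vert[of y "L y"] ly by simp
  show ?thesis unfolding Inv_def
  proof (intro conjI ballI allI impI)
    show "K \<subseteq> reach d K \<sigma>" using I by (simp add: Inv_def)
  next
    fix z assume z: "z \<in> reach d K \<sigma>"
    show "z @ [(L(y := L y + 1)) z] \<in> reach (Suc d) ?K' ?s'"
    proof (cases "z = y")
      case True then show ?thesis using yn by simp
    next
      case False then show ?thesis using I z mono by (auto simp: Inv_def)
    qed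
  next
    fix z h assume zh: "z @ [h] \<in> ?K'"
    show "z \<in> reach d K \<sigma>"
      using zh I y(1) by (auto simp: Inv_def)
  next
    fix z h assume zh: "z @ [h] \<in> ?K'" "z \<notin> K"
    show "h < (L(y := L y + 1)) z"
    proof (cases "z @ [h] = y @ [L y]")
      case True then show ?thesis by simp
    next
      case False
      then have "z @ [h] \<in> K'" using zh by blast
      then have "h < L z" using I zh(2) by (auto simp: Inv_def)
      then show ?thesis by auto
    qed
  qed
qed

lemma inv_good:
  assumes I: "Inv d K \<sigma> K' \<sigma>' L" and y: "y \<in> reach d K \<sigma>" "y \<notin> K" "y @ [L y] \<notin> K'"
    and T: "T \<subseteq> S" "T \<subseteq> dirs d"
  shows "Inv d (insert y K) (\<sigma>(y := T)) (insert (y @ [L y]) K') (\<sigma>'(y @ [L y] := S))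
           (\<lambda>z. if z \<in> reach d K \<sigma> then L z else L y)"
proof -
  let ?K' = "insert (y @ [L y]) K'" and ?s' = "\<sigma>'(y @ [L y] := S)"
  let ?R = "reach d K \<sigma>" and ?Rn = "reach d (insert y K) (\<sigma>(y := T))"
  let ?L = "\<lambda>z. if z \<in> reach d K \<sigma> then L z else L y"
  have KR: "K \<subseteq> ?R" using I by (simp add: Inv_def)
  have mono': "reach (Suc d) K' \<sigma>' \<subseteq> reach (Suc d) ?K' ?s'" using y(3) by (rule reach_upd)
  have mono: "?R \<subseteq> ?Rn" using y(2) by (rule reach_upd)
  have extd: "?Rn \<subseteq> ?R \<union> step y ` T" using KR by (rule reach_ext)
  have ly: "length y = d" using reach_length[OF y(1)] .
  have yh: "y @ [L y] \<in> reach (Suc d) ?K' ?s'" using I y(1) mono' by (auto simp: Inv_def)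
  show ?thesis unfolding Inv_def
  proof (intro conjI ballI allI impI)
    show "insert y K \<subseteq> ?Rn" using KR mono y(1) by auto
  next
    fix z assume z: "z \<in> ?Rn"
    show "z @ [?L z] \<in> reach (Suc d) ?K' ?s'"
    proof (cases "z \<in> ?R")
      case True then show ?thesis using I mono' by (auto simp: Inv_def)
    next
      case False
      then obtain v where v: "v \<in> T" "z = step y v" using z extd by auto
      then have "fst v < length y" using T ly by (auto simp: dirs_def)
      then have "z @ [L y] = step (y @ [L y]) v" using v by (simp add: step_append)
      moreover have "step (y @ [L y]) v \<in> reach (Suc d) ?K' ?s'"
        using yh v T by (intro reach_step) auto
      ultimately show ?thesis using False by simp
    qed
  next
    fix z h assume zh: "z @ [h] \<in> ?K'"
    show "z \<in> ?Rn"
    proof (cases "z @ [h] = y @ [L y]")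
      case True then have "z = y" by simp
      then show ?thesis using mono y(1) by auto
    next
      case False then show ?thesis using zh I mono by (auto simp: Inv_def)
    qed
  next
    fix z h assume zh: "z @ [h] \<in> ?K'" "z \<notin> insert y K"
    then have "z @ [h] \<in> K'" by auto
    then have "z \<in> ?R" "h < L z" using I zh(2) by (auto simp: Inv_def)
    then show "h < ?L z" by simp
  qed
qed



lemma choice_pmf_Ck: "choice_pmf k d = pmf_of_set (Ck k d)"
  by (simp add: choice_pmf_def Ck_def)

lemma W_mg: "(\<And>\<omega>. f (mg \<sigma> K \<omega>)) \<Longrightarrow> W J q dflt f K \<sigma> = 1"
  by (rule W_one) (simp add: mg_def)

lemma W_mg0: "(\<And>\<omega>. \<not> f (mg \<sigma> K \<omega>)) \<Longrightarrow> W J q dflt f K \<sigma> = 0"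
  by (rule W_zero) (simp add: mg_def)

lemma core:
  assumes k: "k \<le> 2 * d"
  shows "card (bx (Suc d) n - K') = m \<Longrightarrow> Inv d K \<sigma> K' \<sigma>' L \<Longrightarrow>
    W (bx d n) (choice_pmf k d) {} (Hn d n) K \<sigma>
      \<le> W (bx (Suc d) n) (choice_pmf (Suc k) (Suc d)) {} (Hn (Suc d) n) K' \<sigma>'"
proof (induction m arbitrary: K \<sigma> K' \<sigma>' L rule: less_induct)
  case (less m K \<sigma> K' \<sigma>' L)
  let ?R = "reach d K \<sigma>" and ?R' = "reach (Suc d) K' \<sigma>'"
  let ?W = "W (bx d n) (choice_pmf k d) {} (Hn d n)"
  let ?W' = "W (bx (Suc d) n) (choice_pmf (Suc k) (Suc d)) {} (Hn (Suc d) n)"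
  note I = less.prems(2)
  have W'1: "?W' K' \<sigma>' = 1" if z: "z \<in> ?R'" "int n \<le> nrm z" for z
  proof (rule W_mg)
    fix \<omega>
    have "z \<in> reach (Suc d) UNIV (mg \<sigma>' K' \<omega>)" using z reach_mg by blast
    then show "Hn (Suc d) n (mg \<sigma>' K' \<omega>)" using z by (auto simp: Hn_def)
  qed
  show ?case
  proof (cases "\<exists>y\<in>?R. int n \<le> nrm y")
    case True
    then obtain y where y: "y \<in> ?R" "int n \<le> nrm y" by blast
    then have "y @ [L y] \<in> ?R'" using I by (auto simp: Inv_def)
    moreover have "int n \<le> nrm (y @ [L y])" using y by simp
    ultimately have "?W' K' \<sigma>' = 1" by (rule W'1)
    then show ?thesis using W_le_one by simp
  next
    case nA: False
    show ?thesis
    proof (cases "\<exists>z\<in>?R'. int n \<le> nrm z")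
      case True
      then have "?W' K' \<sigma>' = 1" using W'1 by blast
      then show ?thesis using W_le_one by simp
    next
      case nB: False
      show ?thesis
      proof (cases "?R \<subseteq> K")
        case True
        have "?W K \<sigma> = 0"
        proof (rule W_mg0)
          fix \<omega>
          have "reach d UNIV (mg \<sigma> K \<omega>) \<subseteq> ?R" using True by (rule reach_mg_closed)
          then show "\<not> Hn d n (mg \<sigma> K \<omega>)" using nA by (auto simp: Hn_def)
        qed
        then show ?thesis using W_nonneg by simp
      next
        case False
        then obtain y where y: "y \<in> ?R" "y \<notin> K" by blast
        define h where "h = L y"
        define yh where "yh = y @ [h]"
        have yJ: "y \<in> bx d n" using y nA reach_length[OF y(1)] by (auto simp: bx_def)
        have yhR: "yh \<in> ?R'" using I y by (auto simp: Inv_def yh_def h_def)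
        have yhJ: "yh \<in> bx (Suc d) n" using yhR nB reach_length[OF yhR] by (auto simp: bx_def)
        have yhK: "yh \<notin> K'" using I y by (auto simp: Inv_def yh_def h_def)
        have card_less: "card (bx (Suc d) n - insert yh K') < m"
        proof -
          have "bx (Suc d) n - insert yh K' = (bx (Suc d) n - K') - {yh}" by auto
          moreover have "card ((bx (Suc d) n - K') - {yh}) < card (bx (Suc d) n - K')"
            using yhJ yhK finite_box by (intro card_Diff1_less) auto
          ultimately show ?thesis using less.prems(1) by simp
        qed
        have ck: "Ck k d \<noteq> {}" "finite (Ck k d)" using Ck_nonempty[OF k] finite_Ck by auto
        have ck1: "Ck (Suc k) (Suc d) \<noteq> {}" "finite (Ck (Suc k) (Suc d))"
          using Ck_nonempty[of "Suc k" "Suc d"] k finite_Ck by auto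
        have FI: "?W K \<sigma> = (\<Sum>T\<in>Ck k d. ?W (insert y K) (\<sigma>(y := T))) / real (card (Ck k d))"
          unfolding choice_pmf_Ck using finite_box yJ y(2) ck by (intro W_FI) auto
        have FI': "?W' K' \<sigma>' = (\<Sum>S\<in>Ck (Suc k) (Suc d). ?W' (insert yh K') (\<sigma>'(yh := S)))
                      / real (card (Ck (Suc k) (Suc d)))"
          unfolding choice_pmf_Ck using finite_box yhJ yhK ck1 by (intro W_FI) auto
        have "?W K \<sigma> \<le> (\<Sum>S\<in>Ck (Suc k) (Suc d). ?W' (insert yh K') (\<sigma>'(yh := S)))
                      / real (card (Ck (Suc k) (Suc d)))"
        proof (rule counting[OF k])
          fix S assume S: "S \<in> Ck (Suc k) (Suc d)" "bad d S"
          have "Inv d K \<sigma> (insert yh K') (\<sigma>'(yh := S)) (L(y := h + 1))"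
            unfolding yh_def h_def using I y yhK S
            by (intro inv_bad) (auto simp: bad_def yh_def h_def)
          then show "?W K \<sigma> \<le> ?W' (insert yh K') (\<sigma>'(yh := S))"
            using less.IH[OF card_less refl] by blast
        next
          fix S T assume S: "S \<in> Ck (Suc k) (Suc d)" "\<not> bad d S" "T \<in> Ck k d" "T \<subseteq> S"
          have "Inv d (insert y K) (\<sigma>(y := T)) (insert yh K') (\<sigma>'(yh := S))
                  (\<lambda>z. if z \<in> ?R then L z else L y)"
            unfolding yh_def h_def using I y yhK S
            by (intro inv_good) (auto simp: Ck_def yh_def h_def)
          then show "?W (insert y K) (\<sigma>(y := T)) \<le> ?W' (insert yh K') (\<sigma>'(yh := S))"
            using less.IH[OF card_less refl] by blast
        qed (rule FI)
        then show ?thesis using FI' by simp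
      qed
    qed
  qed
qed

lemma core_init:
  assumes k: "k \<le> 2 * d"
  shows "measure_pmf.prob (Pi_pmf (bx d n) {} (\<lambda>_. choice_pmf k d)) {\<omega>. Hn d n \<omega>}
       \<le> measure_pmf.prob (Pi_pmf (bx (Suc d) n) {} (\<lambda>_. choice_pmf (Suc k) (Suc d))) {\<omega>. Hn (Suc d) n \<omega>}"
proof -
  have "Inv d {} \<sigma> {} \<sigma>' (\<lambda>_. 0)" for \<sigma> \<sigma>'
  proof -
    have "reach d {} \<sigma> = {origin d}"
    proof
      show "reach d {} \<sigma> \<subseteq> {origin d}" by (rule reach_subsetI) auto
    qed simp
    then show ?thesis by (simp add: Inv_def origin_Suc[symmetric])
  qed
  then have "W (bx d n) (choice_pmf k d) {} (Hn d n) {} (\<lambda>_. {})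
      \<le> W (bx (Suc d) n) (choice_pmf (Suc k) (Suc d)) {} (Hn (Suc d) n) {} (\<lambda>_. {})"
    using core[OF k refl] by blast
  then show ?thesis by (simp add: W_empty)
qed


theorem theorem2p6:
  fixes k d :: nat
  assumes "1 \<le> k" and "1 \<le> d" and "k \<le> 2 * d"
  shows "thetaD (k + 1) (d + 1) \<ge> thetaD k d"
proof -
  have "\<exists>N. \<forall>n\<ge>N. measure (DnG k d) {\<omega> \<in> space (DnG k d). Hn d n \<omega>}
          \<le> measure (DnG (Suc k) (Suc d)) {\<omega> \<in> space (DnG (Suc k) (Suc d)). Hn (Suc d) n \<omega>}"
    using core_init[OF assms(3)] by (simp add: theta_prob)
  then have "thetaD k d \<le> thetaD (Suc k) (Suc d)"
    by (rule LIMSEQ_le[OF theta_lim theta_lim])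
  then show ?thesis by simp
qed

end
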